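(* Let $\mathcal{X}$ be a finite set, $\pi$ a probability mass function on $\mathcal{X}$ with full support, and $P$ a $\pi$-stationary transition matrix on $\mathcal{X}$. Let a group $\mathcal{G}$ act on $\mathcal{X}$ with orbits $\mathcal{O}_1,\dots,\mathcal{O}_k$, and let $G$ be the associated Gibbs orbit kernel. Then the projection chains of $GPG$ and of $P$ induced by the partition $(\mathcal{O}_i)_{i=1}^k$ coincide: $\overline{GPG}=\overline{P}$.
   Context: The Gibbs orbit kernel is $G(x,y)=\pi(y)/\pi(\mathcal{O}(x))$ if $y$ lies in the orbit $\mathcal{O}(x)$ of $x$, and $0$ otherwise, where $\pi(A)=\sum_{z\in A}\pi(z)$. For a transition matrix $K$ on $\mathcal{X}$, its projection chain induced by $(\mathcal{O}_i)_{i=1}^k$ is the $k\times k$ matrix $\overline{K}(i,j)=\frac{1}{\pi(\mathcal{O}_i)}\sum_{x\in\mathcal{O}_i,\,y\in\mathcal{O}_j}\pi(x)K(x,y)$. *)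

theory Defs
  imports "HOL-Analysis.Analysis" "HOL-Algebra.Group_Action"
begin

definition full_support_pmf :: "'b set \<Rightarrow> ('b \<Rightarrow> real) \<Rightarrow> bool" where
  "full_support_pmf X \<pi> \<longleftrightarrow> (\<forall>x\<in>X. \<pi> x > 0) \<and> (\<Sum>x\<in>X. \<pi> x) = 1"

definition transition_matrix :: "'b set \<Rightarrow> ('b \<Rightarrow> 'b \<Rightarrow> real) \<Rightarrow> bool" where
  "transition_matrix X P \<longleftrightarrow> (\<forall>x\<in>X. \<forall>y\<in>X. P x y \<ge> 0) \<and> (\<forall>x\<in>X. (\<Sum>y\<in>X. P x y) = 1)"

definition stationary :: "'b set \<Rightarrow> ('b \<Rightarrow> real) \<Rightarrow> ('b \<Rightarrow> 'b \<Rightarrow> real) \<Rightarrow> bool" where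
  "stationary X \<pi> P \<longleftrightarrow> (\<forall>y\<in>X. (\<Sum>x\<in>X. \<pi> x * P x y) = \<pi> y)"

definition kmult :: "'b set \<Rightarrow> ('b \<Rightarrow> 'b \<Rightarrow> real) \<Rightarrow> ('b \<Rightarrow> 'b \<Rightarrow> real) \<Rightarrow> 'b \<Rightarrow> 'b \<Rightarrow> real" where
  "kmult X K L x y = (\<Sum>z\<in>X. K x z * L z y)"

definition gibbs_orbit_kernel ::
  "('g, 'c) monoid_scheme \<Rightarrow> ('g \<Rightarrow> 'b \<Rightarrow> 'b) \<Rightarrow> ('b \<Rightarrow> real) \<Rightarrow> 'b \<Rightarrow> 'b \<Rightarrow> real" where
  "gibbs_orbit_kernel G \<phi> \<pi> x y =
     (if y \<in> orbit G \<phi> x then \<pi> y / (\<Sum>z\<in>orbit G \<phi> x. \<pi> z) else 0)"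

definition proj_chain :: "('b \<Rightarrow> real) \<Rightarrow> ('b \<Rightarrow> 'b \<Rightarrow> real) \<Rightarrow> 'b set \<Rightarrow> 'b set \<Rightarrow> real" where
  "proj_chain \<pi> K A B = (1 / (\<Sum>x\<in>A. \<pi> x)) * (\<Sum>x\<in>A. \<Sum>y\<in>B. \<pi> x * K x y)"

end

theory Submission
  imports Defs
begin
lemma swp: fixes g :: "'b \<Rightarrow> 'b \<Rightarrow> real"
  shows "(\<Sum>x\<in>A. \<Sum>y\<in>B. p x * (\<Sum>w\<in>X. (\<Sum>z\<in>X. g x z * P z w) * g w y))
   = (\<Sum>z\<in>X. \<Sum>w\<in>X. (\<Sum>x\<in>A. p x * g x z) * P z w * (\<Sum>y\<in>B. g w y))"
proof -
  have "(\<Sum>x\<in>A. \<Sum>y\<in>B. p x * (\<Sum>w\<in>X. (\<Sum>z\<in>X. g x z * P z w) * g w y))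
     = (\<Sum>x\<in>A. \<Sum>y\<in>B. \<Sum>w\<in>X. \<Sum>z\<in>X. p x * g x z * P z w * g w y)"
    by (simp add: sum_distrib_left sum_distrib_right mult.assoc)
  also have "\<dots> = (\<Sum>x\<in>A. \<Sum>w\<in>X. \<Sum>z\<in>X. \<Sum>y\<in>B. p x * g x z * P z w * g w y)"
    by (simp add: sum.swap[of _ B])
  also have "\<dots> = (\<Sum>w\<in>X. \<Sum>z\<in>X. \<Sum>x\<in>A. \<Sum>y\<in>B. p x * g x z * P z w * g w y)"
    by (simp add: sum.swap[of _ A])
  also have "\<dots> = (\<Sum>z\<in>X. \<Sum>w\<in>X. \<Sum>x\<in>A. \<Sum>y\<in>B. p x * g x z * P z w * g w y)"
    by (rule sum.swap)
  also have "\<dots> = (\<Sum>z\<in>X. \<Sum>w\<in>X. \<Sum>y\<in>B. \<Sum>x\<in>A. p x * g x z * P z w * g w y)"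
    apply (rule sum.cong[OF refl]) apply (rule sum.cong[OF refl]) by (rule sum.swap)
  also have "\<dots> = (\<Sum>z\<in>X. \<Sum>w\<in>X. (\<Sum>x\<in>A. p x * g x z) * P z w * (\<Sum>y\<in>B. g w y))"
    by (simp add: sum_distrib_left sum_distrib_right mult.assoc)
  finally show ?thesis .
qed

context group_action begin
lemma orbit_sub: "x \<in> E \<Longrightarrow> orbit G \<phi> x \<subseteq> E"
  using surj_prop unfolding orbit_def by blast
lemma orb_eq: assumes "x \<in> E" "A \<in> orbits G E \<phi>" shows "x \<in> A \<longleftrightarrow> orbit G \<phi> x = A"
proof
  assume "orbit G \<phi> x = A" thus "x \<in> A" using orbit_refl assms by blast
next
  assume xA: "x \<in> A"
  obtain a where a: "a \<in> E" "A = orbit G \<phi> a" using assms unfolding orbits_def by blast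
  have xa: "x \<in> orbit G \<phi> a" using xA a by simp
  have ax: "a \<in> orbit G \<phi> x" using orbit_sym a assms xa by blast
  show "orbit G \<phi> x = A"
  proof (intro equalityI subsetI)
    fix z assume z: "z \<in> orbit G \<phi> x"
    have "z \<in> E" using orbit_sub assms z by blast
    thus "z \<in> A" using orbit_trans[OF a(1) assms(1) _ xa z] a by blast
  next
    fix z assume z: "z \<in> A"
    have zE: "z \<in> E" using orbit_sub a z by blast
    show "z \<in> orbit G \<phi> x" using orbit_trans[OF assms(1) a(1) zE ax] z a by blast
  qed
qed
end

theorem proposition2p4:
  fixes X :: "'b set" and \<pi> :: "'b \<Rightarrow> real" and P :: "'b \<Rightarrow> 'b \<Rightarrow> real"
    and G :: "('g, 'c) monoid_scheme" and \<phi> :: "'g \<Rightarrow> 'b \<Rightarrow> 'b"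
  assumes "finite X"
    and "full_support_pmf X \<pi>"
    and "transition_matrix X P"
    and "stationary X \<pi> P"
    and "group_action G X \<phi>"
    and "A \<in> orbits G X \<phi>" and "B \<in> orbits G X \<phi>"
  shows "proj_chain \<pi> (kmult X (kmult X (gibbs_orbit_kernel G \<phi> \<pi>) P) (gibbs_orbit_kernel G \<phi> \<pi>)) A B
         = proj_chain \<pi> P A B"
proof -
  interpret ga: group_action G X \<phi> by fact
  define g where "g = gibbs_orbit_kernel G \<phi> \<pi>"
  have pos: "\<And>x. x \<in> X \<Longrightarrow> \<pi> x > 0" using assms(2) unfolding full_support_pmf_def by blast
  have sub: "\<And>C. C \<in> orbits G X \<phi> \<Longrightarrow> C \<subseteq> X \<and> C \<noteq> {}"
    using ga.orbit_sub ga.orbit_refl unfolding orbits_def by blast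
  have Spos: "\<And>C. C \<in> orbits G X \<phi> \<Longrightarrow> (\<Sum>z\<in>C. \<pi> z) > 0"
  proof -
    fix C assume C: "C \<in> orbits G X \<phi>"
    have fin: "finite C" using sub[OF C] assms(1) finite_subset by blast
    show "(\<Sum>z\<in>C. \<pi> z) > 0"
      by (rule sum_pos[OF fin]) (use sub[OF C] pos in auto)
  qed
  have A1: "(\<Sum>x\<in>A. \<pi> x * g x z) = (if z \<in> A then \<pi> z else 0)" for z
  proof -
    have "(\<Sum>x\<in>A. \<pi> x * g x z) = (\<Sum>x\<in>A. \<pi> x * (if z \<in> A then \<pi> z / (\<Sum>z\<in>A. \<pi> z) else 0))"
    proof (rule sum.cong[OF refl])
      fix x assume x: "x \<in> A"
      have "orbit G \<phi> x = A" using ga.orb_eq[OF _ assms(6)] x sub[OF assms(6)] by blast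
      thus "\<pi> x * g x z = \<pi> x * (if z \<in> A then \<pi> z / (\<Sum>z\<in>A. \<pi> z) else 0)"
        unfolding g_def gibbs_orbit_kernel_def by simp
    qed
    also have "\<dots> = (if z \<in> A then \<pi> z else 0)"
      using Spos[OF assms(6)] by (simp add: sum_distrib_right[symmetric])
    finally show ?thesis .
  qed
  have B1: "(\<Sum>y\<in>B. g w y) = (if w \<in> B then 1 else 0)" if w: "w \<in> X" for w
  proof (cases "w \<in> B")
    case True
    have "orbit G \<phi> w = B" using ga.orb_eq[OF w assms(7)] True by blast
    hence "(\<Sum>y\<in>B. g w y) = (\<Sum>y\<in>B. \<pi> y / (\<Sum>z\<in>B. \<pi> z))"
      unfolding g_def gibbs_orbit_kernel_def by simp
    also have "\<dots> = 1" using Spos[OF assms(7)] by (simp add: sum_divide_distrib[symmetric])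
    finally show ?thesis using True by simp
  next
    case False
    have "g w y = 0" if y: "y \<in> B" for y
    proof -
      have yX: "y \<in> X" using sub[OF assms(7)] y by blast
      have "y \<notin> orbit G \<phi> w"
      proof
        assume yw: "y \<in> orbit G \<phi> w"
        have "w \<in> orbit G \<phi> y" using ga.orbit_sym[OF w yX yw] .
        moreover have "orbit G \<phi> y = B" using ga.orb_eq[OF yX assms(7)] y by blast
        ultimately show False using False by blast
      qed
      thus ?thesis unfolding g_def gibbs_orbit_kernel_def by simp
    qed
    thus ?thesis using False by simp
  qed
  have AX: "A \<subseteq> X" and BX: "B \<subseteq> X" using sub assms(6,7) by auto
  have "(\<Sum>x\<in>A. \<Sum>y\<in>B. \<pi> x * kmult X (kmult X g P) g x y)
      = (\<Sum>z\<in>X. \<Sum>w\<in>X. (\<Sum>x\<in>A. \<pi> x * g x z) * P z w * (\<Sum>y\<in>B. g w y))"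
    unfolding kmult_def by (rule swp)
  also have "\<dots> = (\<Sum>z\<in>X. \<Sum>w\<in>X. (if z \<in> A then \<pi> z else 0) * P z w * (if w \<in> B then 1 else 0))"
    using A1 B1 by simp
  also have "\<dots> = (\<Sum>z\<in>X. if z \<in> A then (\<Sum>w\<in>X. if w \<in> B then \<pi> z * P z w else 0) else 0)"
    by (intro sum.cong refl) (auto intro: sum.cong)
  also have "\<dots> = (\<Sum>z\<in>A. \<Sum>w\<in>B. \<pi> z * P z w)"
    using AX BX assms(1) by (simp add: sum.If_cases Int_absorb1 Int_absorb2)
  finally show ?thesis unfolding proj_chain_def g_def by simp
qed

end
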